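(* For every integer $n\ge2$ the following hold (vector sums with zero-padding on the right; $(0,v)$ denotes $v$ with a $0$ prepended): 1. If $n$ is odd, $\gamma^{(n,(n+1)/2)}=\sum_{k=1}^{(n-1)/2}\big[\widetilde\gamma^{(n-1,k)}+\gamma^{(n-1,\overline{k})}\big]$. 2. If $n$ is odd, $\gamma^{(n,\overline{(n+1)/2})}=\sum_{k=1}^{(n-1)/2}\big[\widetilde\gamma^{(n-1,\overline{k})}+(0,\gamma^{(n-1,k)})\big]$. 3. For $1\le j<(n+1)/2$: $\gamma^{(n,j)}=2\sum_{k=1}^{\lfloor n/2\rfloor}\gamma^{(n-1,\overline{k})}+2\sum_{k=1}^{j-1}\widetilde\gamma^{(n-1,k)}+\sum_{k=j}^{\lfloor n/2\rfloor}\gamma^{(n-1,k)}$. 4. For $1\le j<(n+1)/2$: $\gamma^{(n,\overline{j})}=2\sum_{k=1}^{\lfloor n/2\rfloor}(0,\gamma^{(n-1,k)})+2\sum_{k=1}^{j-1}\widetilde\gamma^{(n-1,\overline{k})}+\sum_{k=j}^{\lfloor n/2\rfloor}\gamma^{(n-1,\overline{k})}$. 5. For $1\le j<(n+1)/2$: $\widetilde\gamma^{(n,j)}=\sum_{k=1}^{j-1}\widetilde\gamma^{(n-1,k)}+2\sum_{k=j}^{\lfloor n/2\rfloor}(0,\gamma^{(n-1,k)})+\sum_{k=1}^{\lfloor n/2\rfloor}\gamma^{(n-1,\overline{k})}$. 6. For $1\le j<(n+1)/2$: $\widetilde\gamma^{(n,\overline{j})}=\sum_{k=1}^{j-1}\widetilde\gamma^{(n-1,\overline{k})}+2\sum_{k=j}^{\lfloor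 n/2\rfloor}(0,\gamma^{(n-1,\overline{k})})+\sum_{k=1}^{\lfloor n/2\rfloor}(0,\gamma^{(n-1,k)})$.
   Context: $B_n$ is the group of signed permutations $\sigma=\sigma_1\cdots\sigma_n$ of $\{\pm1,\dots,\pm n\}$ ($\sigma_{-i}=-\sigma_i$); write $\bar s=-s$. With $\sigma_0=0$, $\mathrm{des}_B(\sigma)=|\{i\in\{0,\dots,n-1\}:\sigma_i>\sigma_{i+1}\}|$. For $j\in\{\pm1,\dots,\pm n\}$ let $B^+_{n,j}(t)=\sum t^{\mathrm{des}_B(\sigma)}$ over $\sigma\in B_n$ with $\sigma_n>0$ and $\sigma_1=j$. For $1\le j\le n$ set $\mathbb{B}^+_{n,j}=B^+_{n,j}+B^+_{n,n-j+1}$ and $\mathbb{B}^+_{n,\bar j}=B^+_{n,\bar j}+B^+_{n,\overline{n-j+1}}$ if $j\ne(n+1)/2$, and $\mathbb{B}^+_{n,j}=B^+_{n,j}$, $\mathbb{B}^+_{n,\bar j}=B^+_{n,\bar j}$ if $j=(n+1)/2$. For $1\le j<(n+1)/2$ set $\widetilde{\mathbb{B}}^+_{n,j}(t)=tB^+_{n,j}(t)+B^+_{n,n-j+1}(t)$ and $\widetilde{\mathbb{B}}^+_{n,\bar j}(t)=tB^+_{n,\overline{n-j+1}}(t)+B^+_{n,\bar j}(t)$. For a polynomial $P$ with $P(t)=t^mP(1/t)$, its $\gamma$-vector with respect to $m$ is the unique $(\gamma_0,\dots,\gamma_{\lfloor m/2\rfloor})$ with $P(t)=\sum_k\gamma_kt^k(1+t)^{m-2k}$.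 Then $\gamma^{(n,j)}$, $\gamma^{(n,\bar j)}$, $\widetilde\gamma^{(n,j)}$, $\widetilde\gamma^{(n,\bar j)}$ are the $\gamma$-vectors of $\mathbb{B}^+_{n,j}$, $\mathbb{B}^+_{n,\bar j}$, $\widetilde{\mathbb{B}}^+_{n,j}$, $\widetilde{\mathbb{B}}^+_{n,\bar j}$ with respect to $m=n-1$, $n$, $n$, $n+1$ respectively. *)

theory Defs
  imports "HOL-Computational_Algebra.Polynomial"
begin

definition signed_perms :: "nat \<Rightarrow> int list set" where
  "signed_perms n = {s. length s = n \<and> set (map abs s) = {1..int n}}"

definition desB :: "int list \<Rightarrow> nat" where
  "desB s = card {i \<in> {0..<length s}. (0 # s) ! i > (0 # s) ! (i + 1)}"

definition Bplus :: "nat \<Rightarrow> int \<Rightarrow> int poly" where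
  "Bplus n j = (\<Sum>s\<in>{s \<in> signed_perms n. last s > 0 \<and> hd s = j}. monom 1 (desB s))"

definition BBpos :: "nat \<Rightarrow> nat \<Rightarrow> int poly" where
  "BBpos n j = (if 2 * j = n + 1 then Bplus n (int j)
                else Bplus n (int j) + Bplus n (int (n + 1 - j)))"

definition BBneg :: "nat \<Rightarrow> nat \<Rightarrow> int poly" where
  "BBneg n j = (if 2 * j = n + 1 then Bplus n (- int j)
                else Bplus n (- int j) + Bplus n (- int (n + 1 - j)))"

definition BBtpos :: "nat \<Rightarrow> nat \<Rightarrow> int poly" where
  "BBtpos n j = pCons 0 (Bplus n (int j)) + Bplus n (int (n + 1 - j))"

definition BBtneg :: "nat \<Rightarrow> nat \<Rightarrow> int poly" where
  "BBtneg n j = pCons 0 (Bplus n (- int (n + 1 - j))) + Bplus n (- int j)"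

text \<open>gamma-vector of P with respect to m, as a function nat => int that vanishes
  beyond floor(m/2) (i.e. the vector padded with zeros on the right).\<close>
definition gamma_vec :: "nat \<Rightarrow> int poly \<Rightarrow> (nat \<Rightarrow> int)" where
  "gamma_vec m P = (THE g. (\<forall>i > m div 2. g i = 0) \<and>
      P = (\<Sum>k\<le>m div 2. smult (g k) (monom 1 k * [:1, 1:] ^ (m - 2 * k))))"

definition gam_pos :: "nat \<Rightarrow> nat \<Rightarrow> nat \<Rightarrow> int" where
  "gam_pos n j = gamma_vec (n - 1) (BBpos n j)"

definition gam_neg :: "nat \<Rightarrow> nat \<Rightarrow> nat \<Rightarrow> int" where
  "gam_neg n j = gamma_vec n (BBneg n j)"

definition gamt_pos :: "nat \<Rightarrow> nat \<Rightarrow> nat \<Rightarrow> int" where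
  "gamt_pos n j = gamma_vec n (BBtpos n j)"

definition gamt_neg :: "nat \<Rightarrow> nat \<Rightarrow> nat \<Rightarrow> int" where
  "gamt_neg n j = gamma_vec (n + 1) (BBtneg n j)"

definition shift0 :: "(nat \<Rightarrow> int) \<Rightarrow> nat \<Rightarrow> int" where
  "shift0 v i = (if i = 0 then 0 else v (i - 1))"

end

theory Submission
  imports Defs
begin

fun adjdes :: "int list \<Rightarrow> nat" where
  "adjdes (x # y # r) = (if x > y then 1 else 0) + adjdes (y # r)"
| "adjdes _ = 0"

lemma card_des_list: "card {i \<in> {0..<length l - 1}. l ! i > l ! (i + 1)} = adjdes l"
proof (induction l rule: adjdes.induct)
  case (1 x y r)
  let ?A = "{i \<in> {0..<length (y # r) - 1}. (y # r) ! i > (y # r) ! (i + 1)}"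
  have eq: "{i \<in> {0..<length (x # y # r) - 1}. (x # y # r) ! i > (x # y # r) ! (i + 1)}
        = (if x > y then {0} else {}) \<union> Suc ` ?A"
    apply (rule set_eqI)
    subgoal for i by (cases i) auto
    done
  have "0 \<notin> Suc ` ?A" by auto
  moreover have "card (Suc ` ?A) = card ?A" by (simp add: card_image)
  ultimately show ?case using eq 1 by (auto simp: card_insert_if)
qed auto

lemma desB_adj: "desB s = adjdes (0 # s)"
  using card_des_list[of "0 # s"] unfolding desB_def by simp

lemma adjdes_map: "strict_mono (u :: int \<Rightarrow> int) \<Longrightarrow> adjdes (map u l) = adjdes l"
proof (induction l rule: adjdes.induct)
  case (1 x y r)
  then show ?case by (simp add: strict_mono_less)
qed auto

definition unstd :: "int \<Rightarrow> int \<Rightarrow> int" where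
  "unstd a x = (if x \<ge> a then x + 1 else if x \<le> - a then x - 1 else x)"

definition std :: "int \<Rightarrow> int \<Rightarrow> int" where
  "std a x = (if x > a then x - 1 else if x < - a then x + 1 else x)"

lemma unstd_mono: "a \<ge> 1 \<Longrightarrow> strict_mono (unstd a)"
  unfolding strict_mono_def unstd_def by auto

lemma unstd_0: "a \<ge> 1 \<Longrightarrow> unstd a 0 = 0"
  unfolding unstd_def by auto

lemma desB_cons: "strict_mono u \<Longrightarrow>
  desB (j # map u (x # r)) + (if x < 0 then 1 else 0)
   = desB (x # r) + (if j < 0 then 1 else 0) + (if j > u x then 1 else 0)"
  by (simp add: desB_adj adjdes_map[of u "x # r", simplified])

definition Sp :: "nat \<Rightarrow> int list set" where
  "Sp N = {t \<in> signed_perms N. last t > 0}"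

lemma finite_signed_perms: "finite (signed_perms N)"
proof -
  have "signed_perms N \<subseteq> {xs. set xs \<subseteq> {- int N..int N} \<and> length xs = N}"
  proof
    fix s assume s: "s \<in> signed_perms N"
    have "\<forall>x\<in>set s. \<bar>x\<bar> \<in> {1..int N}"
      using s unfolding signed_perms_def by auto
    then have "set s \<subseteq> {- int N..int N}" by force
    then show "s \<in> {xs. set xs \<subseteq> {- int N..int N} \<and> length xs = N}"
      using s unfolding signed_perms_def by auto
  qed
  moreover have "finite {xs. set xs \<subseteq> {- int N..int N} \<and> length xs = N}"
    by (rule finite_lists_length_eq) simp
  ultimately show ?thesis by (rule finite_subset)
qed

lemma finite_Sp: "finite (Sp N)"
  unfolding Sp_def using finite_signed_perms by simp

lemma abs_unstd: "a \<ge> 1 \<Longrightarrow> x \<noteq> 0 \<Longrightarrow> \<bar>unstd a x\<bar> = (if \<bar>x\<bar> \<ge> a then \<bar>x\<bar> + 1 else \<bar>x\<bar>)"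
  unfolding unstd_def by auto

lemma abs_std: "a \<ge> 1 \<Longrightarrow> \<bar>x\<bar> \<noteq> a \<Longrightarrow> \<bar>std a x\<bar> = (if \<bar>x\<bar> > a then \<bar>x\<bar> - 1 else \<bar>x\<bar>)"
  unfolding std_def by auto

lemma unstd_std: "a \<ge> 1 \<Longrightarrow> \<bar>x\<bar> \<noteq> a \<Longrightarrow> unstd a (std a x) = x"
  unfolding unstd_def std_def by auto

lemma img_up: "1 \<le> a \<Longrightarrow> a \<le> int N + 1 \<Longrightarrow>
  (\<lambda>y. if y \<ge> a then y + 1 else y) ` {1..int N} = {1..int N + 1} - {a}"
proof (rule set_eqI, rule iffI)
  fix z assume "1 \<le> a" "a \<le> int N + 1" "z \<in> {1..int N + 1} - {a}"
  then show "z \<in> (\<lambda>y. if y \<ge> a then y + 1 else y) ` {1..int N}"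
  proof (cases "z > a")
    case True then show ?thesis using \<open>z \<in> _\<close> \<open>1 \<le> a\<close> by (intro image_eqI[of _ _ "z - 1"]) auto
  next
    case False then show ?thesis using \<open>z \<in> _\<close> \<open>a \<le> int N + 1\<close> by (intro image_eqI[of _ _ "z"]) auto
  qed
qed auto

lemma img_down: "1 \<le> a \<Longrightarrow> a \<le> int N + 1 \<Longrightarrow>
  (\<lambda>y. if y > a then y - 1 else y) ` ({1..int N + 1} - {a}) = {1..int N}"
proof (rule set_eqI, rule iffI)
  fix z assume "1 \<le> a" "a \<le> int N + 1" "z \<in> {1..int N}"
  then show "z \<in> (\<lambda>y. if y > a then y - 1 else y) ` ({1..int N + 1} - {a})"
  proof (cases "z \<ge> a")
    case True then show ?thesis using \<open>z \<in> _\<close> \<open>1 \<le> a\<close> by (intro image_eqI[of _ _ "z + 1"]) auto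
  next
    case False then show ?thesis using \<open>z \<in> _\<close> by (intro image_eqI[of _ _ "z"]) auto
  qed
qed auto

lemma ins_mem:
  assumes n: "n \<ge> 2" and j: "1 \<le> \<bar>j\<bar>" "\<bar>j\<bar> \<le> int n" and t: "t \<in> Sp (n - 1)"
  shows "j # map (unstd \<bar>j\<bar>) t \<in> {s \<in> signed_perms n. last s > 0 \<and> hd s = j}"
proof -
  let ?a = "\<bar>j\<bar>"
  have len: "length t = n - 1" and st: "set (map abs t) = {1..int (n - 1)}" and lt: "last t > 0"
    using t unfolding Sp_def signed_perms_def by auto
  have tne: "t \<noteq> []" using len n by auto
  have nz: "\<forall>x\<in>set t. x \<noteq> 0" using st by force
  have "abs ` unstd ?a ` set t = (\<lambda>y. if y \<ge> ?a then y + 1 else y) ` abs ` set t"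
    unfolding image_image using abs_unstd[OF j(1)] nz by (intro image_cong) auto
  also have "\<dots> = {1..int (n - 1) + 1} - {?a}"
    using st img_up[OF j(1), of "n - 1"] j n by simp
  also have "int (n - 1) + 1 = int n" using n by simp
  finally have "set (map abs (j # map (unstd ?a) t)) = {1..int n}"
    using j by auto
  moreover have "last (j # map (unstd ?a) t) > 0"
  proof -
    have "unstd ?a 0 < unstd ?a (last t)"
      using lt unstd_mono[OF j(1)] by (simp add: strict_mono_less)
    then show ?thesis using tne unstd_0[OF j(1)] by (simp add: last_map)
  qed
  ultimately show ?thesis using len n unfolding signed_perms_def by auto
qed

lemma del_mem:
  assumes n: "n \<ge> 2" and j: "1 \<le> \<bar>j\<bar>" "\<bar>j\<bar> \<le> int n"
    and s: "s \<in> {s \<in> signed_perms n. last s > 0 \<and> hd s = j}"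
  shows "s \<in> (\<lambda>t. j # map (unstd \<bar>j\<bar>) t) ` Sp (n - 1)"
proof -
  let ?a = "\<bar>j\<bar>"
  have len: "length s = n" and st: "set (map abs s) = {1..int n}" and ls: "last s > 0" and hs: "hd s = j"
    using s unfolding signed_perms_def by auto
  have sne: "s \<noteq> []" using len n by auto
  then have s_eq: "s = j # tl s" using hs by (cases s) auto
  have "card (set (map abs s)) = length (map abs s)" using st len by simp
  then have "distinct (map abs s)" by (rule card_distinct)
  then have dist: "?a \<notin> set (map abs (tl s))" using s_eq by (metis distinct.simps(2) list.simps(9))
  have stl: "set (map abs (tl s)) = {1..int n} - {?a}"
    using st dist s_eq by (metis Diff_insert_absorb list.simps(15) list.simps(9))
  let ?t = "map (std ?a) (tl s)"
  have nz: "\<forall>x\<in>set (tl s). \<bar>x\<bar> \<noteq> ?a" using dist by (metis image_eqI list.set_map)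
  have bck: "map (unstd ?a) ?t = tl s"
    using nz unstd_std[OF j(1)] by (induct "tl s") (auto simp: map_idI)
  have "abs ` std ?a ` set (tl s) = (\<lambda>y. if y > ?a then y - 1 else y) ` abs ` set (tl s)"
    unfolding image_image using abs_std[OF j(1)] nz by (intro image_cong) auto
  also have "\<dots> = {1..int (n - 1)}"
    using stl img_down[OF j(1), of "n - 1"] j n by (simp add: of_nat_diff)
  finally have st2: "set (map abs ?t) = {1..int (n - 1)}" by (simp add: image_image)
  have tlne: "tl s \<noteq> []" using len n by (cases s) auto
  have "last (tl s) = last s" using tlne s_eq by (metis last_ConsR)
  then have "last (tl s) > 0" using ls by simp
  moreover have "\<bar>last (tl s)\<bar> \<noteq> ?a" using nz tlne by auto
  ultimately have "std ?a (last (tl s)) > 0" unfolding std_def using j by auto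
  then have "last ?t > 0" using tlne by (simp add: last_map)
  then have "?t \<in> Sp (n - 1)" using st2 len unfolding Sp_def signed_perms_def by (simp only: length_map length_tl mem_Collect_eq)
  moreover have "s = j # map (unstd ?a) ?t" using bck s_eq by simp
  ultimately show ?thesis by blast
qed

lemma Sn_image:
  assumes n: "n \<ge> 2" and j: "1 \<le> \<bar>j\<bar>" "\<bar>j\<bar> \<le> int n"
  shows "(\<lambda>t. j # map (unstd \<bar>j\<bar>) t) ` Sp (n - 1) = {s \<in> signed_perms n. last s > 0 \<and> hd s = j}"
  using ins_mem[OF assms] del_mem[OF assms] by blast

lemma Sn_inj:
  assumes j: "1 \<le> \<bar>j\<bar>"
  shows "inj_on (\<lambda>t. j # map (unstd \<bar>j\<bar>) t) A"
proof -
  have i: "inj (unstd \<bar>j\<bar>)" using unstd_mono[OF j] strict_mono_imp_inj_on by blast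
  show ?thesis by (intro inj_onI) (simp add: inj_map_eq_map[OF i])
qed

definition ee :: "int \<Rightarrow> int \<Rightarrow> nat" where
  "ee j x = (if j < 0 then 1 else 0) + (if j > unstd \<bar>j\<bar> x then 1 else 0) - (if x < 0 then 1 else 0)"

lemma desB_step:
  assumes j: "1 \<le> \<bar>j\<bar>" and t: "t \<noteq> []"
  shows "desB (j # map (unstd \<bar>j\<bar>) t) = desB t + ee j (hd t)"
proof -
  obtain x r where tx: "t = x # r" using t by (cases t) auto
  have m: "strict_mono (unstd \<bar>j\<bar>)" using unstd_mono[OF j] .
  have A: "(if j < 0 then 1 else 0) + (if j > unstd \<bar>j\<bar> x then 1 else 0) \<ge> (if x < 0 then (1::nat) else 0)"
  proof (cases "x < 0")
    case True
    then have "unstd \<bar>j\<bar> x < unstd \<bar>j\<bar> 0" using m by (simp add: strict_mono_less)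
    then have "unstd \<bar>j\<bar> x < 0" using unstd_0[OF j] by simp
    then show ?thesis by auto
  qed auto
  show ?thesis using desB_cons[OF m, of j x r] A unfolding tx ee_def by simp
qed

definition XN :: "nat \<Rightarrow> int set" where
  "XN N = {x. x \<noteq> 0 \<and> \<bar>x\<bar> \<le> int N}"

lemma Bplus_rec:
  assumes n: "n \<ge> 2" and j: "1 \<le> \<bar>j\<bar>" "\<bar>j\<bar> \<le> int n"
  shows "Bplus n j = (\<Sum>x\<in>XN (n - 1). monom 1 (ee j x) * Bplus (n - 1) x)"
proof -
  let ?f = "\<lambda>t. j # map (unstd \<bar>j\<bar>) t"
  have "Bplus n j = (\<Sum>s\<in>?f ` Sp (n - 1). monom 1 (desB s))"
    unfolding Bplus_def Sn_image[OF assms] ..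
  also have "\<dots> = (\<Sum>t\<in>Sp (n - 1). monom 1 (desB (?f t)))"
    by (subst sum.reindex[OF Sn_inj[OF j(1)]]) simp
  also have "\<dots> = (\<Sum>x\<in>XN (n - 1). \<Sum>t\<in>{t \<in> Sp (n - 1). hd t = x}. monom 1 (desB (?f t)))"
  proof (rule sum.group[symmetric])
    show "finite (Sp (n - 1))" by (rule finite_Sp)
    show "finite (XN (n - 1))"
    proof -
      have "XN (n - 1) \<subseteq> {- int (n - 1)..int (n - 1)}" unfolding XN_def by auto
      then show ?thesis by (rule finite_subset) simp
    qed
    show "hd ` Sp (n - 1) \<subseteq> XN (n - 1)"
    proof
      fix y assume "y \<in> hd ` Sp (n - 1)"
      then obtain t where t: "t \<in> Sp (n - 1)" "y = hd t" by auto
      have len: "length t = n - 1" and st: "set (map abs t) = {1..int (n - 1)}"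
        using t unfolding Sp_def signed_perms_def by auto
      have "t \<noteq> []" using len n by auto
      then have "hd t \<in> set t" by simp
      then have "\<bar>hd t\<bar> \<in> {1..int (n - 1)}" using st by (metis image_eqI list.set_map)
      then show "y \<in> XN (n - 1)" using t unfolding XN_def by auto
    qed
  qed
  also have "\<dots> = (\<Sum>x\<in>XN (n - 1). monom 1 (ee j x) * Bplus (n - 1) x)"
  proof (rule sum.cong[OF refl])
    fix x assume "x \<in> XN (n - 1)"
    have "(\<Sum>t\<in>{t \<in> Sp (n - 1). hd t = x}. monom (1::int) (desB (?f t)))
        = (\<Sum>t\<in>{t \<in> Sp (n - 1). hd t = x}. monom 1 (ee j x) * monom 1 (desB t))"
    proof (rule sum.cong[OF refl])
      fix t assume t: "t \<in> {t \<in> Sp (n - 1). hd t = x}"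
      have "length t = n - 1" using t unfolding Sp_def signed_perms_def by auto
      then have "t \<noteq> []" using n by auto
      then show "(monom 1 (desB (?f t)) :: int poly) = monom 1 (ee j x) * monom 1 (desB t)"
        using desB_step[OF j(1)] t by (simp add: mult_monom add.commute)
    qed
    also have "\<dots> = monom 1 (ee j x) * Bplus (n - 1) x"
      unfolding Bplus_def Sp_def sum_distrib_left
      by (rule sum.cong) auto
    finally show "(\<Sum>t\<in>{t \<in> Sp (n - 1). hd t = x}. monom 1 (desB (?f t))) = monom 1 (ee j x) * Bplus (n - 1) x" .
  qed
  finally show ?thesis .
qed

lemma XN_split: "(\<Sum>x\<in>XN N. f x) = (\<Sum>k=1..N. f (int k)) + (\<Sum>k=1..N. f (- int k))"
proof -
  have e: "XN N = int ` {1..N} \<union> (\<lambda>k. - int k) ` {1..N}"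
  proof (rule set_eqI, rule iffI)
    fix x assume "x \<in> XN N"
    then have x: "x \<noteq> 0" "\<bar>x\<bar> \<le> int N" unfolding XN_def by auto
    show "x \<in> int ` {1..N} \<union> (\<lambda>k. - int k) ` {1..N}"
    proof (cases "x > 0")
      case True then show ?thesis using x by (intro UnI1 image_eqI[of _ _ "nat x"]) auto
    next
      case False then show ?thesis using x by (intro UnI2 image_eqI[of _ _ "nat (- x)"]) auto
    qed
  qed (auto simp: XN_def)
  have d: "int ` {1..N} \<inter> (\<lambda>k. - int k) ` {1..N} = {}" by auto
  show ?thesis unfolding e
    by (subst sum.union_disjoint) (auto simp: d sum.reindex inj_on_def)
qed

lemma ee_vals:
  assumes "1 \<le> jj" "1 \<le> k"
  shows "ee (int jj) (int k) = (if k < jj then 1 else 0)"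
    "ee (int jj) (- int k) = 0"
    "ee (- int jj) (int k) = 1"
    "ee (- int jj) (- int k) = (if k < jj then 0 else 1)"
  using assms unfolding ee_def unstd_def by auto

abbreviation X :: "int poly" where "X \<equiv> monom 1 1"

lemma R1:
  assumes n: "n \<ge> 2" and j: "1 \<le> jj" "jj \<le> n"
  shows "Bplus n (int jj) = (\<Sum>k=1..n-1. (if k < jj then X else 1) * Bplus (n-1) (int k))
            + (\<Sum>k=1..n-1. Bplus (n-1) (- int k))" (is "_ = ?rhs")
proof -
  have "Bplus n (int jj) = (\<Sum>x\<in>XN (n - 1). monom 1 (ee (int jj) x) * Bplus (n - 1) x)"
    using Bplus_rec[OF n, of "int jj"] j by simp
  also have "\<dots> = ?rhs" unfolding XN_split
    apply (intro arg_cong2[where f="(+)"] sum.cong refl)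
    subgoal for k using ee_vals[OF j(1), of k] by (simp add: monom_0 one_pCons)
    subgoal for k using ee_vals[OF j(1), of k] by (simp add: monom_0 one_pCons)
    done
  finally show ?thesis .
qed

lemma R2:
  assumes n: "n \<ge> 2" and j: "1 \<le> jj" "jj \<le> n"
  shows "Bplus n (- int jj) = (\<Sum>k=1..n-1. X * Bplus (n-1) (int k))
            + (\<Sum>k=1..n-1. (if k < jj then 1 else X) * Bplus (n-1) (- int k))" (is "_ = ?rhs")
proof -
  have "Bplus n (- int jj) = (\<Sum>x\<in>XN (n - 1). monom 1 (ee (- int jj) x) * Bplus (n - 1) x)"
    using Bplus_rec[OF n, of "- int jj"] j by simp
  also have "\<dots> = ?rhs" unfolding XN_split
    apply (intro arg_cong2[where f="(+)"] sum.cong refl)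
    subgoal for k using ee_vals[OF j(1), of k] by (simp add: monom_0 one_pCons)
    subgoal for k using ee_vals[OF j(1), of k] by (simp add: monom_0 one_pCons)
    done
  finally show ?thesis .
qed

definition gexp :: "nat \<Rightarrow> (nat \<Rightarrow> int) \<Rightarrow> int poly" where
  "gexp m g = (\<Sum>k\<le>m div 2. smult (g k) (monom 1 k * [:1, 1:] ^ (m - 2 * k)))"

definition hasG :: "nat \<Rightarrow> int poly \<Rightarrow> (nat \<Rightarrow> int) \<Rightarrow> bool" where
  "hasG m P g \<longleftrightarrow> (\<forall>i > m div 2. g i = 0) \<and> P = gexp m g"

lemma gexp_zero:
  assumes z: "gexp m d = 0" and v: "\<forall>i > m div 2. d i = 0"
  shows "d i = 0"
proof (rule ccontr)
  assume "d i \<noteq> 0"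
  define i0 where "i0 = (LEAST i. d i \<noteq> 0)"
  have d0: "d i0 \<noteq> 0" unfolding i0_def using \<open>d i \<noteq> 0\<close> by (rule LeastI)
  have lt: "\<And>k. k < i0 \<Longrightarrow> d k = 0" unfolding i0_def using not_less_Least by blast
  have i0le: "i0 \<le> m div 2" using d0 v by (meson not_le)
  have "coeff (gexp m d) i0 = (\<Sum>k\<le>m div 2. d k * coeff (monom 1 k * [:1, 1:] ^ (m - 2 * k)) i0)"
    unfolding gexp_def coeff_sum by simp
  also have "\<dots> = (\<Sum>k\<le>m div 2. if k = i0 then d i0 else 0)"
  proof (rule sum.cong[OF refl])
    fix k assume "k \<in> {..m div 2}"
    show "d k * coeff (monom 1 k * [:1, 1:] ^ (m - 2 * k)) i0 = (if k = i0 then d i0 else 0)"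
    proof (cases "k < i0")
      case True then show ?thesis using lt by simp
    next
      case False then show ?thesis by (auto simp: coeff_monom_mult coeff_0_power)
    qed
  qed
  also have "\<dots> = d i0" using i0le by simp
  finally show False using z d0 by simp
qed

lemma gexp_diff: "gexp m g - gexp m h = gexp m (\<lambda>i. g i - h i)"
  unfolding gexp_def by (simp add: sum_subtractf[symmetric] smult_diff_left)

lemma gexp_add: "gexp m g + gexp m h = gexp m (\<lambda>i. g i + h i)"
  unfolding gexp_def by (simp add: sum.distrib[symmetric] smult_add_left)

lemma hasG_gamma: assumes "hasG m P g" shows "gamma_vec m P = g"
  unfolding gamma_vec_def
proof (rule the_equality)
  show "(\<forall>i>m div 2. g i = 0) \<and> P = (\<Sum>k\<le>m div 2. smult (g k) (monom 1 k * [:1, 1:] ^ (m - 2 * k)))"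
    using assms unfolding hasG_def gexp_def by simp
next
  fix h assume h: "(\<forall>i>m div 2. h i = 0) \<and> P = (\<Sum>k\<le>m div 2. smult (h k) (monom 1 k * [:1, 1:] ^ (m - 2 * k)))"
  have "gexp m (\<lambda>i. h i - g i) = 0"
    using h assms unfolding hasG_def gexp_diff[symmetric] by (simp add: gexp_def)
  moreover have "\<forall>i>m div 2. h i - g i = 0" using h assms unfolding hasG_def by simp
  ultimately have "\<And>i. h i - g i = 0" by (rule gexp_zero)
  then show "h = g" by (simp add: fun_eq_iff)
qed

lemma hasG_add: "hasG m P g \<Longrightarrow> hasG m Q h \<Longrightarrow> hasG m (P + Q) (\<lambda>i. g i + h i)"
  unfolding hasG_def by (simp add: gexp_add)

lemma hasG_0: "hasG m 0 (\<lambda>i. 0)"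
  unfolding hasG_def gexp_def by simp

lemma hasG_sum: "finite K \<Longrightarrow> (\<And>k. k \<in> K \<Longrightarrow> hasG m (P k) (g k)) \<Longrightarrow>
  hasG m (\<Sum>k\<in>K. P k) (\<lambda>i. \<Sum>k\<in>K. g k i)"
proof (induction K rule: finite_induct)
  case empty then show ?case using hasG_0 by simp
next
  case (insert x F)
  then show ?case using hasG_add[of m "P x" "g x" "\<Sum>k\<in>F. P k" "\<lambda>i. \<Sum>k\<in>F. g k i"] by simp
qed

lemma gexp_bound:
  assumes v: "\<forall>i > m div 2. g i = 0" and M: "M \<ge> m div 2"
  shows "gexp m g = (\<Sum>k\<le>M. smult (g k) (monom 1 k * [:1, 1:] ^ (m - 2 * k)))"
proof -
  have "(\<Sum>k\<le>M. smult (g k) (monom 1 k * [:1, 1:] ^ (m - 2 * k)))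
     = (\<Sum>k\<le>m div 2. smult (g k) (monom 1 k * [:1, 1:] ^ (m - 2 * k)))"
    using M v by (intro sum.mono_neutral_right) auto
  then show ?thesis unfolding gexp_def by simp
qed

lemma hasG_1X: assumes "hasG m P g" shows "hasG (m + 1) ([:1, 1:] * P) g"
proof -
  have v: "\<forall>i > m div 2. g i = 0" and P: "P = gexp m g" using assms unfolding hasG_def by auto
  have v2: "\<forall>i > (m + 1) div 2. g i = 0" using v by auto
  have "[:1, 1:] * P = (\<Sum>k\<le>(m + 1) div 2. [:1, 1:] * smult (g k) (monom 1 k * [:1, 1:] ^ (m - 2 * k)))"
    unfolding P gexp_bound[OF v, of "(m + 1) div 2", simplified] sum_distrib_left by simp
  also have "\<dots> = (\<Sum>k\<le>(m + 1) div 2. smult (g k) (monom 1 k * [:1, 1:] ^ (m + 1 - 2 * k)))"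
  proof (rule sum.cong[OF refl])
    fix k assume "k \<in> {..(m + 1) div 2}"
    show "[:1, 1:] * smult (g k) (monom 1 k * [:1, 1:] ^ (m - 2 * k)) = smult (g k) (monom 1 k * [:1, 1:] ^ (m + 1 - 2 * k))"
    proof (cases "k \<le> m div 2")
      case True
      then have "m + 1 - 2 * k = Suc (m - 2 * k)" by auto
      then show ?thesis by (simp add: algebra_simps)
    next
      case False then show ?thesis using v by simp
    qed
  qed
  finally show ?thesis unfolding hasG_def gexp_def using v2 by simp
qed

lemma hasG_X: assumes "hasG m P g" shows "hasG (m + 2) (monom 1 1 * P) (shift0 g)"
proof -
  have v: "\<forall>i > m div 2. g i = 0" and P: "P = gexp m g" using assms unfolding hasG_def by auto
  have v2: "\<forall>i > (m + 2) div 2. shift0 g i = 0" using v unfolding shift0_def by auto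
  have "gexp (m + 2) (shift0 g) = (\<Sum>k\<le>Suc (m div 2). smult (shift0 g k) (monom 1 k * [:1, 1:] ^ (m + 2 - 2 * k)))"
    unfolding gexp_def by simp
  also have "\<dots> = (\<Sum>k\<le>m div 2. smult (g k) (monom 1 (Suc k) * [:1, 1:] ^ (m - 2 * k)))"
    unfolding sum.atMost_Suc_shift by (simp add: shift0_def)
  also have "\<dots> = monom 1 1 * P"
    unfolding P gexp_def sum_distrib_left
  proof (rule sum.cong[OF refl])
    fix k
    have e: "monom (1::int) (Suc k) = monom 1 1 * monom 1 k" by (simp add: mult_monom)
    show "smult (g k) (monom 1 (Suc k) * [:1, 1:] ^ (m - 2 * k)) = monom 1 1 * smult (g k) (monom 1 k * [:1, 1:] ^ (m - 2 * k))"
      unfolding e by (simp add: mult.assoc)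
  qed
  finally show ?thesis unfolding hasG_def using v2 by simp
qed

lemma L_refl: "(b::nat) \<le> n \<Longrightarrow> 1 \<le> a \<Longrightarrow> a \<le> n \<Longrightarrow> (\<Sum>k=a..b. f (n - k)) = (\<Sum>k=n-b..n-a. (f k :: 'a::comm_monoid_add))"
  by (rule sum.reindex_bij_witness[of _ "\<lambda>k. n - k" "\<lambda>k. n - k"]) auto

lemma L_split:
  assumes "1 \<le> j" "2 * j \<le> (n::nat) + 1"
  shows "(\<Sum>k=1..n-1. w k) = (\<Sum>k=1..j-1. w k) + (\<Sum>k=j..n-j. w k) + (\<Sum>k=n+1-j..n-1. (w k :: 'a::comm_monoid_add))"
proof -
  have e: "{1..n-1} = ({1..j-1} \<union> {j..n-j}) \<union> {n+1-j..n-1}" using assms by auto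
  have d1: "{1..j-1} \<inter> {j..n-j} = {}" by auto
  have d2: "({1..j-1} \<union> {j..n-j}) \<inter> {n+1-j..n-1} = {}" using assms by auto
  have "sum w ({1..j-1} \<union> {j..n-j} \<union> {n+1-j..n-1}) = sum w ({1..j-1} \<union> {j..n-j}) + sum w {n+1-j..n-1}"
    by (rule sum.union_disjoint) (use d2 in auto)
  moreover have "sum w ({1..j-1} \<union> {j..n-j}) = sum w {1..j-1} + sum w {j..n-j}"
    by (rule sum.union_disjoint) (use d1 in auto)
  ultimately show ?thesis unfolding e by simp
qed

lemma L_pair:
  assumes "1 \<le> j" "2 * j \<le> (n::nat) + 1"
  shows "(\<Sum>k=j..n div 2. if 2 * k = n then f k else f k + f (n - k)) = (\<Sum>k=j..n-j. (f k :: 'a::comm_monoid_add))"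
proof -
  have "(\<Sum>k=j..n div 2. if 2 * k = n then f k else f k + f (n - k))
      = (\<Sum>k=j..n div 2. f k + (if 2 * k = n then 0 else f (n - k)))"
    by (rule sum.cong) auto
  also have "\<dots> = (\<Sum>k=j..n div 2. f k) + (\<Sum>k\<in>{j..n div 2}. if 2 * k = n then 0 else f (n - k))"
    by (rule sum.distrib)
  also have "(\<Sum>k\<in>{j..n div 2}. if 2 * k = n then 0 else f (n - k)) = (\<Sum>k\<in>{j..n - n div 2 - 1}. f (n - k))"
    using assms by (intro sum.mono_neutral_cong) auto
  also have "\<dots> = (\<Sum>k=n - (n - n div 2 - 1)..n - j. f k)"
    using assms by (intro L_refl) auto
  also have "n - (n - n div 2 - 1) = n div 2 + 1" using assms by auto
  also have "(\<Sum>k=j..n div 2. f k) + (\<Sum>k=n div 2 + 1..n - j. f k) = (\<Sum>k=j..n-j. f k)"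
  proof -
    have e: "{j..n-j} = {j..n div 2} \<union> {n div 2 + 1..n - j}" using assms by auto
    show ?thesis unfolding e by (subst sum.union_disjoint) auto
  qed
  finally show ?thesis .
qed

definition Lo :: "(nat \<Rightarrow> int poly) \<Rightarrow> nat \<Rightarrow> int poly" where "Lo f j = (\<Sum>k=1..j-1. f k)"
definition Mid :: "(nat \<Rightarrow> int poly) \<Rightarrow> nat \<Rightarrow> nat \<Rightarrow> int poly" where "Mid f n j = (\<Sum>k=j..n-j. f k)"
definition Hi :: "(nat \<Rightarrow> int poly) \<Rightarrow> nat \<Rightarrow> nat \<Rightarrow> int poly" where "Hi f n j = (\<Sum>k=n+1-j..n-1. f k)"
definition Fu :: "(nat \<Rightarrow> int poly) \<Rightarrow> nat \<Rightarrow> int poly" where "Fu f n = (\<Sum>k=1..n-1. f k)"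
definition bb :: "nat \<Rightarrow> nat \<Rightarrow> int poly" where "bb n k = Bplus (n - 1) (int k)"
definition cc :: "nat \<Rightarrow> nat \<Rightarrow> int poly" where "cc n k = Bplus (n - 1) (- int k)"

lemma Fu_split: "1 \<le> j \<Longrightarrow> 2 * j \<le> n + 1 \<Longrightarrow> Fu f n = Lo f j + Mid f n j + Hi f n j"
  unfolding Fu_def Lo_def Mid_def Hi_def by (rule L_split)

lemma split_w:
  assumes "1 \<le> j" "2 * j \<le> n + 1"
    and lo: "\<And>k. 1 \<le> k \<Longrightarrow> k \<le> j - 1 \<Longrightarrow> w k = a * f k"
    and mid: "\<And>k. j \<le> k \<Longrightarrow> k \<le> n - j \<Longrightarrow> w k = b * f k"
    and hi: "\<And>k. n + 1 - j \<le> k \<Longrightarrow> k \<le> n - 1 \<Longrightarrow> w k = c * f k"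
  shows "(\<Sum>k=1..n-1. w k) = a * Lo f j + b * Mid f n j + c * Hi f n j"
  unfolding L_split[OF assms(1,2)] Lo_def Mid_def Hi_def sum_distrib_left
  using lo mid hi by (intro arg_cong2[where f="(+)"] sum.cong) auto

lemma R1a:
  assumes n: "n \<ge> 2" and j: "1 \<le> j" "2 * j \<le> n + 1"
  shows "Bplus n (int j) = X * Lo (bb n) j + Mid (bb n) n j + Hi (bb n) n j + Fu (cc n) n"
proof -
  have "Bplus n (int j) = (\<Sum>k=1..n-1. (if k < j then X else 1) * bb n k) + Fu (cc n) n"
    using R1[OF n j(1)] j unfolding bb_def cc_def Fu_def by simp
  also have "(\<Sum>k=1..n-1. (if k < j then X else 1) * bb n k) = X * Lo (bb n) j + 1 * Mid (bb n) n j + 1 * Hi (bb n) n j"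
    using j by (intro split_w) auto
  finally show ?thesis by simp
qed

lemma R1b:
  assumes n: "n \<ge> 2" and j: "1 \<le> j" "2 * j \<le> n + 1"
  shows "Bplus n (int (n + 1 - j)) = X * Lo (bb n) j + X * Mid (bb n) n j + Hi (bb n) n j + Fu (cc n) n"
proof -
  have "Bplus n (int (n + 1 - j)) = (\<Sum>k=1..n-1. (if k < n + 1 - j then X else 1) * bb n k) + Fu (cc n) n"
    using R1[OF n, of "n + 1 - j"] j unfolding bb_def cc_def Fu_def by simp
  also have "(\<Sum>k=1..n-1. (if k < n + 1 - j then X else 1) * bb n k) = X * Lo (bb n) j + X * Mid (bb n) n j + 1 * Hi (bb n) n j"
    using j by (intro split_w) auto
  finally show ?thesis by simp
qed

lemma R2a:
  assumes n: "n \<ge> 2" and j: "1 \<le> j" "2 * j \<le> n + 1"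
  shows "Bplus n (- int j) = X * Fu (bb n) n + Lo (cc n) j + X * Mid (cc n) n j + X * Hi (cc n) n j"
proof -
  have "Bplus n (- int j) = X * Fu (bb n) n + (\<Sum>k=1..n-1. (if k < j then 1 else X) * cc n k)"
    using R2[OF n j(1)] j unfolding bb_def cc_def Fu_def by (simp add: sum_distrib_left)
  also have "(\<Sum>k=1..n-1. (if k < j then 1 else X) * cc n k) = 1 * Lo (cc n) j + X * Mid (cc n) n j + X * Hi (cc n) n j"
    using j by (intro split_w) auto
  finally show ?thesis by (simp add: add.assoc)
qed

lemma R2b:
  assumes n: "n \<ge> 2" and j: "1 \<le> j" "2 * j \<le> n + 1"
  shows "Bplus n (- int (n + 1 - j)) = X * Fu (bb n) n + Lo (cc n) j + Mid (cc n) n j + X * Hi (cc n) n j"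
proof -
  have "Bplus n (- int (n + 1 - j)) = X * Fu (bb n) n + (\<Sum>k=1..n-1. (if k < n + 1 - j then 1 else X) * cc n k)"
    using R2[OF n, of "n + 1 - j"] j unfolding bb_def cc_def Fu_def by (simp add: sum_distrib_left)
  also have "(\<Sum>k=1..n-1. (if k < n + 1 - j then 1 else X) * cc n k) = 1 * Lo (cc n) j + 1 * Mid (cc n) n j + X * Hi (cc n) n j"
    using j by (intro split_w) auto
  finally show ?thesis by (simp add: add.assoc)
qed

lemma pCons0: "pCons 0 p = X * p"
  by (rule poly_eqI) (simp add: coeff_monom_mult coeff_pCons split: nat.split)

lemma onepX: "[:1, 1:] = 1 + X"
  by (rule poly_eqI) (simp add: coeff_pCons coeff_monom split: nat.split)

lemma BBpos_prev: "n \<ge> 2 \<Longrightarrow> BBpos (n - 1) k = (if 2 * k = n then bb n k else bb n k + bb n (n - k))"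
  unfolding BBpos_def bb_def by (simp add: of_nat_diff)

lemma BBneg_prev: "n \<ge> 2 \<Longrightarrow> BBneg (n - 1) k = (if 2 * k = n then cc n k else cc n k + cc n (n - k))"
  unfolding BBneg_def cc_def by (simp add: of_nat_diff)

lemma BBtpos_prev: "n \<ge> 2 \<Longrightarrow> BBtpos (n - 1) k = X * bb n k + bb n (n - k)"
  unfolding BBtpos_def bb_def pCons0 by (simp add: of_nat_diff)

lemma BBtneg_prev: "n \<ge> 2 \<Longrightarrow> BBtneg (n - 1) k = X * cc n (n - k) + cc n k"
  unfolding BBtneg_def cc_def pCons0 by (simp add: of_nat_diff)

lemma S_pos_mid: "n \<ge> 2 \<Longrightarrow> 1 \<le> j \<Longrightarrow> 2 * j \<le> n + 1 \<Longrightarrow> (\<Sum>k=j..n div 2. BBpos (n - 1) k) = Mid (bb n) n j"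
  unfolding Mid_def BBpos_prev by (rule L_pair)

lemma S_neg_mid: "n \<ge> 2 \<Longrightarrow> 1 \<le> j \<Longrightarrow> 2 * j \<le> n + 1 \<Longrightarrow> (\<Sum>k=j..n div 2. BBneg (n - 1) k) = Mid (cc n) n j"
  unfolding Mid_def BBneg_prev by (rule L_pair)

lemma S_pos_full: "n \<ge> 2 \<Longrightarrow> (\<Sum>k=1..n div 2. BBpos (n - 1) k) = Fu (bb n) n"
  using S_pos_mid[of n 1] unfolding Mid_def Fu_def by simp

lemma S_neg_full: "n \<ge> 2 \<Longrightarrow> (\<Sum>k=1..n div 2. BBneg (n - 1) k) = Fu (cc n) n"
  using S_neg_mid[of n 1] unfolding Mid_def Fu_def by simp

lemma refl_Hi: "n \<ge> 2 \<Longrightarrow> 1 \<le> j \<Longrightarrow> j \<le> n \<Longrightarrow> (\<Sum>k=1..j-1. f (n - k)) = Hi f n j"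
  unfolding Hi_def using L_refl[of "j - 1" n 1 f] by simp

lemma S_tpos: "n \<ge> 2 \<Longrightarrow> 1 \<le> j \<Longrightarrow> j \<le> n \<Longrightarrow> (\<Sum>k=1..j-1. BBtpos (n - 1) k) = X * Lo (bb n) j + Hi (bb n) n j"
proof -
  assume a: "n \<ge> 2" "1 \<le> j" "j \<le> n"
  have h: "(\<Sum>k=1..j-1. bb n (n - k)) = Hi (bb n) n j" using a by (rule refl_Hi)
  show ?thesis unfolding BBtpos_prev[OF a(1)] sum.distrib Lo_def sum_distrib_left h ..
qed

lemma S_tneg: "n \<ge> 2 \<Longrightarrow> 1 \<le> j \<Longrightarrow> j \<le> n \<Longrightarrow> (\<Sum>k=1..j-1. BBtneg (n - 1) k) = X * Hi (cc n) n j + Lo (cc n) j"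
proof -
  assume a: "n \<ge> 2" "1 \<le> j" "j \<le> n"
  have h: "(\<Sum>k=1..j-1. cc n (n - k)) = Hi (cc n) n j" using a by (rule refl_Hi)
  have "(\<Sum>k=1..j-1. X * cc n (n - k)) = X * Hi (cc n) n j" unfolding h[symmetric] sum_distrib_left ..
  then show ?thesis unfolding BBtneg_prev[OF a(1)] sum.distrib Lo_def by simp
qed

definition QQ :: "nat \<Rightarrow> bool" where
  "QQ N \<longleftrightarrow> (\<forall>k. 1 \<le> k \<and> 2 * k \<le> N + 1 \<longrightarrow> hasG (N - 1) (BBpos N k) (gam_pos N k) \<and> hasG N (BBneg N k) (gam_neg N k))
          \<and> (\<forall>k. 1 \<le> k \<and> 2 * k < N + 1 \<longrightarrow> hasG N (BBtpos N k) (gamt_pos N k) \<and> hasG (N + 1) (BBtneg N k) (gamt_neg N k))"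

lemma Qpos: "QQ N \<Longrightarrow> 1 \<le> k \<Longrightarrow> 2 * k \<le> N + 1 \<Longrightarrow> hasG (N - 1) (BBpos N k) (gam_pos N k)"
  unfolding QQ_def by blast
lemma Qneg: "QQ N \<Longrightarrow> 1 \<le> k \<Longrightarrow> 2 * k \<le> N + 1 \<Longrightarrow> hasG N (BBneg N k) (gam_neg N k)"
  unfolding QQ_def by blast
lemma Qtpos: "QQ N \<Longrightarrow> 1 \<le> k \<Longrightarrow> 2 * k < N + 1 \<Longrightarrow> hasG N (BBtpos N k) (gamt_pos N k)"
  unfolding QQ_def by blast
lemma Qtneg: "QQ N \<Longrightarrow> 1 \<le> k \<Longrightarrow> 2 * k < N + 1 \<Longrightarrow> hasG (N + 1) (BBtneg N k) (gamt_neg N k)"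
  unfolding QQ_def by blast

lemma hasG_cong: "hasG m P g \<Longrightarrow> P = Q \<Longrightarrow> (\<And>i. g i = h i) \<Longrightarrow> hasG m Q h"
proof -
  assume a: "hasG m P g" and b: "P = Q" and c: "\<And>i. g i = h i"
  have "g = h" by (rule ext) (rule c)
  then show ?thesis using a b by simp
qed

lemma hasG_1X': "hasG m P g \<Longrightarrow> m' = m + 1 \<Longrightarrow> hasG m' ([:1, 1:] * P) g"
  by (simp only: hasG_1X)

lemma hasG_X': "hasG m P g \<Longrightarrow> m' = m + 2 \<Longrightarrow> hasG m' (X * P) (shift0 g)"
  by (simp only: hasG_X)

lemma hasG_dbl: "hasG m P g \<Longrightarrow> hasG m (P + P) (\<lambda>i. 2 * g i)"
  unfolding mult_2 by (rule hasG_add)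

lemma item3:
  assumes n: "n \<ge> 2" and Q: "QQ (n - 1)" and j: "1 \<le> j" "2 * j < n + 1"
  shows "hasG (n - 1) (BBpos n j) (\<lambda>i. 2 * (\<Sum>k=1..n div 2. gam_neg (n - 1) k i)
         + 2 * (\<Sum>k=1..j - 1. gamt_pos (n - 1) k i) + (\<Sum>k=j..n div 2. gam_pos (n - 1) k i))"
proof -
  have A1: "hasG (n - 1) (\<Sum>k=1..n div 2. BBneg (n - 1) k) (\<lambda>i. \<Sum>k=1..n div 2. gam_neg (n - 1) k i)"
    using n by (intro hasG_sum Qneg[OF Q]) auto
  have A2: "hasG (n - 1) (\<Sum>k=1..j - 1. BBtpos (n - 1) k) (\<lambda>i. \<Sum>k=1..j - 1. gamt_pos (n - 1) k i)"
    using n j by (intro hasG_sum Qtpos[OF Q]) auto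
  have A3: "hasG (n - 1 - 1) (\<Sum>k=j..n div 2. BBpos (n - 1) k) (\<lambda>i. \<Sum>k=j..n div 2. gam_pos (n - 1) k i)"
    using n j by (intro hasG_sum Qpos[OF Q]) auto
  have H: "hasG (n - 1) (((\<Sum>k=1..n div 2. BBneg (n - 1) k) + (\<Sum>k=1..n div 2. BBneg (n - 1) k))
      + ((\<Sum>k=1..j - 1. BBtpos (n - 1) k) + (\<Sum>k=1..j - 1. BBtpos (n - 1) k))
      + [:1, 1:] * (\<Sum>k=j..n div 2. BBpos (n - 1) k))
     (\<lambda>i. 2 * (\<Sum>k=1..n div 2. gam_neg (n - 1) k i)
         + 2 * (\<Sum>k=1..j - 1. gamt_pos (n - 1) k i) + (\<Sum>k=j..n div 2. gam_pos (n - 1) k i))"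
    using n by (intro hasG_add hasG_dbl A1 A2 hasG_1X'[OF A3]) auto
  have "BBpos n j = Bplus n (int j) + Bplus n (int (n + 1 - j))" (is "_ = ?B")
    using j unfolding BBpos_def by simp
  also have "?B = ((\<Sum>k=1..n div 2. BBneg (n - 1) k) + (\<Sum>k=1..n div 2. BBneg (n - 1) k))
      + ((\<Sum>k=1..j - 1. BBtpos (n - 1) k) + (\<Sum>k=1..j - 1. BBtpos (n - 1) k))
      + [:1, 1:] * (\<Sum>k=j..n div 2. BBpos (n - 1) k)"
  proof -
    have j2: "2 * j \<le> n + 1" using j by simp
    have jn: "j \<le> n" using j by simp
    note e = R1a[OF n j(1) j2] R1b[OF n j(1) j2] S_neg_full[OF n] S_tpos[OF n j(1) jn] S_pos_mid[OF n j(1) j2] onepX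
    show ?thesis unfolding e by (simp add: algebra_simps)
  qed
  finally have eq: "BBpos n j = ((\<Sum>k=1..n div 2. BBneg (n - 1) k) + (\<Sum>k=1..n div 2. BBneg (n - 1) k))
      + ((\<Sum>k=1..j - 1. BBtpos (n - 1) k) + (\<Sum>k=1..j - 1. BBtpos (n - 1) k))
      + [:1, 1:] * (\<Sum>k=j..n div 2. BBpos (n - 1) k)" .
  show ?thesis unfolding eq by (rule H)
qed

lemma XBBpos_full: "n \<ge> 2 \<Longrightarrow> (\<Sum>k=1..n div 2. X * BBpos (n - 1) k) = X * Fu (bb n) n"
  by (simp only: sum_distrib_left[symmetric] S_pos_full)

lemma item4:
  assumes n: "n \<ge> 2" and Q: "QQ (n - 1)" and j: "1 \<le> j" "2 * j < n + 1"
  shows "hasG n (BBneg n j) (\<lambda>i. 2 * (\<Sum>k=1..n div 2. shift0 (gam_pos (n - 1) k) i)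
         + 2 * (\<Sum>k=1..j - 1. gamt_neg (n - 1) k i) + (\<Sum>k=j..n div 2. gam_neg (n - 1) k i))"
proof -
  have n1: "n - 1 + 1 = n" using n by simp
  have A1: "hasG n (\<Sum>k=1..n div 2. X * BBpos (n - 1) k) (\<lambda>i. \<Sum>k=1..n div 2. shift0 (gam_pos (n - 1) k) i)"
    using n by (intro hasG_sum hasG_X'[OF Qpos[OF Q]]) auto
  have A2: "hasG n (\<Sum>k=1..j - 1. BBtneg (n - 1) k) (\<lambda>i. \<Sum>k=1..j - 1. gamt_neg (n - 1) k i)"
    using n j by (intro hasG_sum Qtneg[OF Q, unfolded n1]) auto
  have A3': "hasG (n - 1) (\<Sum>k=j..n div 2. BBneg (n - 1) k) (\<lambda>i. \<Sum>k=j..n div 2. gam_neg (n - 1) k i)"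
    using n j by (intro hasG_sum Qneg[OF Q]) auto
  have A3: "hasG n ([:1, 1:] * (\<Sum>k=j..n div 2. BBneg (n - 1) k)) (\<lambda>i. \<Sum>k=j..n div 2. gam_neg (n - 1) k i)"
    using n by (intro hasG_1X'[OF A3']) auto
  have H: "hasG n (((\<Sum>k=1..n div 2. X * BBpos (n - 1) k) + (\<Sum>k=1..n div 2. X * BBpos (n - 1) k))
      + ((\<Sum>k=1..j - 1. BBtneg (n - 1) k) + (\<Sum>k=1..j - 1. BBtneg (n - 1) k))
      + [:1, 1:] * (\<Sum>k=j..n div 2. BBneg (n - 1) k))
     (\<lambda>i. 2 * (\<Sum>k=1..n div 2. shift0 (gam_pos (n - 1) k) i)
         + 2 * (\<Sum>k=1..j - 1. gamt_neg (n - 1) k i) + (\<Sum>k=j..n div 2. gam_neg (n - 1) k i))"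
    by (intro hasG_add hasG_dbl A1 A2 A3)
  have j2: "2 * j \<le> n + 1" and jn: "j \<le> n" using j by simp_all
  have eq: "BBneg n j = ((\<Sum>k=1..n div 2. X * BBpos (n - 1) k) + (\<Sum>k=1..n div 2. X * BBpos (n - 1) k))
      + ((\<Sum>k=1..j - 1. BBtneg (n - 1) k) + (\<Sum>k=1..j - 1. BBtneg (n - 1) k))
      + [:1, 1:] * (\<Sum>k=j..n div 2. BBneg (n - 1) k)"
  proof -
    have "BBneg n j = Bplus n (- int j) + Bplus n (- int (n + 1 - j))"
      using j unfolding BBneg_def by simp
    note e = this R2a[OF n j(1) j2] R2b[OF n j(1) j2] XBBpos_full[OF n] S_tneg[OF n j(1) jn] S_neg_mid[OF n j(1) j2] onepX
    show ?thesis unfolding e by (simp add: algebra_simps)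
  qed
  show ?thesis unfolding eq by (rule H)
qed

lemma item5:
  assumes n: "n \<ge> 2" and Q: "QQ (n - 1)" and j: "1 \<le> j" "2 * j < n + 1"
  shows "hasG n (BBtpos n j) (\<lambda>i. (\<Sum>k=1..j - 1. gamt_pos (n - 1) k i)
         + 2 * (\<Sum>k=j..n div 2. shift0 (gam_pos (n - 1) k) i) + (\<Sum>k=1..n div 2. gam_neg (n - 1) k i))"
proof -
  have A1': "hasG (n - 1) (\<Sum>k=1..j - 1. BBtpos (n - 1) k) (\<lambda>i. \<Sum>k=1..j - 1. gamt_pos (n - 1) k i)"
    using n j by (intro hasG_sum Qtpos[OF Q]) auto
  have A1: "hasG n ([:1, 1:] * (\<Sum>k=1..j - 1. BBtpos (n - 1) k)) (\<lambda>i. \<Sum>k=1..j - 1. gamt_pos (n - 1) k i)"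
    using n by (intro hasG_1X'[OF A1']) auto
  have A2: "hasG n (\<Sum>k=j..n div 2. X * BBpos (n - 1) k) (\<lambda>i. \<Sum>k=j..n div 2. shift0 (gam_pos (n - 1) k) i)"
    using n j by (intro hasG_sum hasG_X'[OF Qpos[OF Q]]) auto
  have A3': "hasG (n - 1) (\<Sum>k=1..n div 2. BBneg (n - 1) k) (\<lambda>i. \<Sum>k=1..n div 2. gam_neg (n - 1) k i)"
    using n by (intro hasG_sum Qneg[OF Q]) auto
  have A3: "hasG n ([:1, 1:] * (\<Sum>k=1..n div 2. BBneg (n - 1) k)) (\<lambda>i. \<Sum>k=1..n div 2. gam_neg (n - 1) k i)"
    using n by (intro hasG_1X'[OF A3']) auto
  have H: "hasG n ([:1, 1:] * (\<Sum>k=1..j - 1. BBtpos (n - 1) k)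
      + ((\<Sum>k=j..n div 2. X * BBpos (n - 1) k) + (\<Sum>k=j..n div 2. X * BBpos (n - 1) k))
      + [:1, 1:] * (\<Sum>k=1..n div 2. BBneg (n - 1) k))
     (\<lambda>i. (\<Sum>k=1..j - 1. gamt_pos (n - 1) k i)
         + 2 * (\<Sum>k=j..n div 2. shift0 (gam_pos (n - 1) k) i) + (\<Sum>k=1..n div 2. gam_neg (n - 1) k i))"
    by (intro hasG_add hasG_dbl A1 A2 A3)
  have j2: "2 * j \<le> n + 1" and jn: "j \<le> n" using j by simp_all
  have eq: "BBtpos n j = [:1, 1:] * (\<Sum>k=1..j - 1. BBtpos (n - 1) k)
      + ((\<Sum>k=j..n div 2. X * BBpos (n - 1) k) + (\<Sum>k=j..n div 2. X * BBpos (n - 1) k))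
      + [:1, 1:] * (\<Sum>k=1..n div 2. BBneg (n - 1) k)"
  proof -
    have m: "(\<Sum>k=j..n div 2. X * BBpos (n - 1) k) = X * Mid (bb n) n j"
      by (simp only: sum_distrib_left[symmetric] S_pos_mid[OF n j(1) j2])
    have "BBtpos n j = X * Bplus n (int j) + Bplus n (int (n + 1 - j))"
      unfolding BBtpos_def pCons0 by simp
    note e = this m R1a[OF n j(1) j2] R1b[OF n j(1) j2] S_neg_full[OF n] S_tpos[OF n j(1) jn] onepX
    show ?thesis unfolding e by (simp add: algebra_simps)
  qed
  show ?thesis unfolding eq by (rule H)
qed

lemma item6:
  assumes n: "n \<ge> 2" and Q: "QQ (n - 1)" and j: "1 \<le> j" "2 * j < n + 1"
  shows "hasG (n + 1) (BBtneg n j) (\<lambda>i. (\<Sum>k=1..j - 1. gamt_neg (n - 1) k i)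
         + 2 * (\<Sum>k=j..n div 2. shift0 (gam_neg (n - 1) k) i) + (\<Sum>k=1..n div 2. shift0 (gam_pos (n - 1) k) i))"
proof -
  have A1': "hasG (n - 1 + 1) (\<Sum>k=1..j - 1. BBtneg (n - 1) k) (\<lambda>i. \<Sum>k=1..j - 1. gamt_neg (n - 1) k i)"
    using n j by (intro hasG_sum Qtneg[OF Q]) auto
  have A1: "hasG (n + 1) ([:1, 1:] * (\<Sum>k=1..j - 1. BBtneg (n - 1) k)) (\<lambda>i. \<Sum>k=1..j - 1. gamt_neg (n - 1) k i)"
    using n by (intro hasG_1X'[OF A1']) auto
  have A2: "hasG (n + 1) (\<Sum>k=j..n div 2. X * BBneg (n - 1) k) (\<lambda>i. \<Sum>k=j..n div 2. shift0 (gam_neg (n - 1) k) i)"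
    using n j by (intro hasG_sum hasG_X'[OF Qneg[OF Q]]) auto
  have A3: "hasG (n + 1) (\<Sum>k=1..n div 2. [:1, 1:] * (X * BBpos (n - 1) k)) (\<lambda>i. \<Sum>k=1..n div 2. shift0 (gam_pos (n - 1) k) i)"
    using n by (intro hasG_sum hasG_1X'[OF hasG_X'[OF Qpos[OF Q]]]) auto
  have H: "hasG (n + 1) ([:1, 1:] * (\<Sum>k=1..j - 1. BBtneg (n - 1) k)
      + ((\<Sum>k=j..n div 2. X * BBneg (n - 1) k) + (\<Sum>k=j..n div 2. X * BBneg (n - 1) k))
      + (\<Sum>k=1..n div 2. [:1, 1:] * (X * BBpos (n - 1) k)))
     (\<lambda>i. (\<Sum>k=1..j - 1. gamt_neg (n - 1) k i)
         + 2 * (\<Sum>k=j..n div 2. shift0 (gam_neg (n - 1) k) i) + (\<Sum>k=1..n div 2. shift0 (gam_pos (n - 1) k) i))"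
    by (intro hasG_add hasG_dbl A1 A2 A3)
  have j2: "2 * j \<le> n + 1" and jn: "j \<le> n" using j by simp_all
  have eq: "BBtneg n j = [:1, 1:] * (\<Sum>k=1..j - 1. BBtneg (n - 1) k)
      + ((\<Sum>k=j..n div 2. X * BBneg (n - 1) k) + (\<Sum>k=j..n div 2. X * BBneg (n - 1) k))
      + (\<Sum>k=1..n div 2. [:1, 1:] * (X * BBpos (n - 1) k))"
  proof -
    have m: "(\<Sum>k=j..n div 2. X * BBneg (n - 1) k) = X * Mid (cc n) n j"
      by (simp only: sum_distrib_left[symmetric] S_neg_mid[OF n j(1) j2])
    have f: "(\<Sum>k=1..n div 2. (1 + X) * (X * BBpos (n - 1) k)) = (1 + X) * (X * Fu (bb n) n)"
      by (simp only: sum_distrib_left[symmetric] S_pos_full[OF n])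
    have "BBtneg n j = X * Bplus n (- int (n + 1 - j)) + Bplus n (- int j)"
      unfolding BBtneg_def pCons0 by simp
    note e = this m f R2a[OF n j(1) j2] R2b[OF n j(1) j2] S_tneg[OF n j(1) jn] onepX
    show ?thesis unfolding e by (simp add: algebra_simps)
  qed
  show ?thesis unfolding eq by (rule H)
qed

lemma item1:
  assumes n: "n \<ge> 2" and Q: "QQ (n - 1)" and o: "odd n"
  shows "hasG (n - 1) (BBpos n ((n + 1) div 2)) (\<lambda>i. \<Sum>k=1..(n - 1) div 2. gamt_pos (n - 1) k i + gam_neg (n - 1) k i)"
proof -
  define h where "h = (n + 1) div 2"
  have h2: "2 * h = n + 1" and h1: "1 \<le> h" and hn: "h \<le> n" using o n unfolding h_def by (auto elim: oddE)
  have hm: "(n - 1) div 2 = h - 1" and hd: "n div 2 = h - 1" using h2 by auto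
  have H: "hasG (n - 1) (\<Sum>k=1..(n - 1) div 2. BBtpos (n - 1) k + BBneg (n - 1) k)
      (\<lambda>i. \<Sum>k=1..(n - 1) div 2. gamt_pos (n - 1) k i + gam_neg (n - 1) k i)"
    using n h2 unfolding hm by (intro hasG_sum hasG_add Qtpos[OF Q] Qneg[OF Q]) auto
  have eq: "BBpos n h = (\<Sum>k=1..(n - 1) div 2. BBtpos (n - 1) k + BBneg (n - 1) k)"
  proof -
    have mid0: "Mid (bb n) n h = 0" unfolding Mid_def using h2 by simp
    have "BBpos n h = Bplus n (int h)" unfolding BBpos_def using h2 by simp
    note e = this R1a[OF n h1, unfolded h2, OF order_refl] mid0 sum.distrib S_tpos[OF n h1 hn] S_neg_full[OF n, unfolded hd]
    show ?thesis unfolding hm e by (simp add: algebra_simps)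
  qed
  have "BBpos n ((n + 1) div 2) = (\<Sum>k=1..(n - 1) div 2. BBtpos (n - 1) k + BBneg (n - 1) k)"
    using eq unfolding h_def .
  then show ?thesis using H by simp
qed

lemma item2:
  assumes n: "n \<ge> 2" and Q: "QQ (n - 1)" and o: "odd n"
  shows "hasG n (BBneg n ((n + 1) div 2)) (\<lambda>i. \<Sum>k=1..(n - 1) div 2. gamt_neg (n - 1) k i + shift0 (gam_pos (n - 1) k) i)"
proof -
  define h where "h = (n + 1) div 2"
  have h2: "2 * h = n + 1" and h1: "1 \<le> h" and hn: "h \<le> n" using o n unfolding h_def by (auto elim: oddE)
  have hm: "(n - 1) div 2 = h - 1" and hd: "n div 2 = h - 1" using h2 by auto
  have n1: "n - 1 + 1 = n" using n by simp
  have H: "hasG n (\<Sum>k=1..(n - 1) div 2. BBtneg (n - 1) k + X * BBpos (n - 1) k)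
      (\<lambda>i. \<Sum>k=1..(n - 1) div 2. gamt_neg (n - 1) k i + shift0 (gam_pos (n - 1) k) i)"
    using n h2 unfolding hm by (intro hasG_sum hasG_add Qtneg[OF Q, unfolded n1] hasG_X'[OF Qpos[OF Q]]) auto
  have eq: "BBneg n h = (\<Sum>k=1..(n - 1) div 2. BBtneg (n - 1) k + X * BBpos (n - 1) k)"
  proof -
    have mid0: "Mid (cc n) n h = 0" unfolding Mid_def using h2 by simp
    have "BBneg n h = Bplus n (- int h)" unfolding BBneg_def using h2 by simp
    note e = this R2a[OF n h1, unfolded h2, OF order_refl] mid0 sum.distrib S_tneg[OF n h1 hn] XBBpos_full[OF n, unfolded hd]
    show ?thesis unfolding hm e by (simp add: algebra_simps)
  qed
  have "BBneg n ((n + 1) div 2) = (\<Sum>k=1..(n - 1) div 2. BBtneg (n - 1) k + X * BBpos (n - 1) k)"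
    using eq unfolding h_def .
  then show ?thesis using H by simp
qed

lemma hasG_gv: "hasG m P g \<Longrightarrow> hasG m P (gamma_vec m P)"
  using hasG_gamma by simp

lemma sp1: "signed_perms 1 = {[1], [-1]}"
proof (rule set_eqI, rule iffI)
  fix s assume "s \<in> signed_perms 1"
  then have l: "length s = 1" and st: "set (map abs s) = {1}" unfolding signed_perms_def by auto
  obtain x where sx: "s = [x]" using l by (cases s) auto
  have "\<bar>x\<bar> = 1" using st sx by simp
  then show "s \<in> {[1], [-1]}" using sx by (cases "x \<ge> 0") auto
qed (auto simp: signed_perms_def)

lemma B11: "Bplus 1 1 = 1"
proof -
  have "{s \<in> signed_perms 1. last s > 0 \<and> hd s = 1} = {[1]}" unfolding sp1 by auto
  moreover have "desB [1] = 0" by (simp add: desB_adj)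
  ultimately show ?thesis unfolding Bplus_def by simp
qed

lemma B1m1: "Bplus 1 (-1) = 0"
proof -
  have "{s \<in> signed_perms 1. last s > 0 \<and> hd s = -1} = {}" unfolding sp1 by auto
  then show ?thesis unfolding Bplus_def by (simp only: sum.empty)
qed

lemma QQ1: "QQ 1"
proof -
  have B11': "Bplus (Suc 0) 1 = 1" using B11 by simp
  have e1: "BBpos 1 1 = 1" unfolding BBpos_def using B11 B11' by simp
  have "hasG 0 (BBpos 1 1) (\<lambda>i. if i = 0 then 1 else 0)"
    unfolding hasG_def gexp_def e1 by simp
  then have a: "hasG 0 (BBpos 1 1) (gam_pos 1 1)" unfolding gam_pos_def diff_self_eq_0 by (rule hasG_gv)
  have B1m1': "Bplus (Suc 0) (-1) = 0" using B1m1 by simp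
  have e2: "BBneg 1 1 = 0" unfolding BBneg_def using B1m1 B1m1' by simp
  have "hasG 1 (BBneg 1 1) (\<lambda>i. 0)"
    unfolding e2 by (rule hasG_0)
  then have b: "hasG 1 (BBneg 1 1) (gam_neg 1 1)" unfolding gam_neg_def by (rule hasG_gv)
  show ?thesis unfolding QQ_def
  proof (intro conjI allI impI)
    fix k :: nat assume "1 \<le> k \<and> 2 * k \<le> 1 + 1"
    then have "k = 1" by auto
    then show "hasG (1 - 1) (BBpos 1 k) (gam_pos 1 k)" "hasG 1 (BBneg 1 k) (gam_neg 1 k)" using a b by simp_all
  next
    fix k :: nat assume "1 \<le> k \<and> 2 * k < 1 + 1"
    then show "hasG 1 (BBtpos 1 k) (gamt_pos 1 k)" "hasG (1 + 1) (BBtneg 1 k) (gamt_neg 1 k)" by auto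
  qed
qed

lemma QQ_step: assumes n: "n \<ge> 2" and Q: "QQ (n - 1)" shows "QQ n"
proof -
  have P1: "\<forall>k. 1 \<le> k \<and> 2 * k \<le> n + 1 \<longrightarrow> hasG (n - 1) (BBpos n k) (gam_pos n k) \<and> hasG n (BBneg n k) (gam_neg n k)"
  proof (intro allI impI)
    fix k assume k: "1 \<le> k \<and> 2 * k \<le> n + 1"
    show "hasG (n - 1) (BBpos n k) (gam_pos n k) \<and> hasG n (BBneg n k) (gam_neg n k)"
    proof (cases "2 * k = n + 1")
      case True
      then have o: "odd n" and kk: "k = (n + 1) div 2" by presburger+
      show ?thesis unfolding gam_pos_def gam_neg_def kk
        by (intro conjI hasG_gv[OF item1[OF n Q o]] hasG_gv[OF item2[OF n Q o]])
    next
      case False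
      then have k2: "2 * k < n + 1" using k by simp
      show ?thesis unfolding gam_pos_def gam_neg_def
        using k k2 by (intro conjI hasG_gv[OF item3[OF n Q]] hasG_gv[OF item4[OF n Q]]) auto
    qed
  qed
  have P2: "\<forall>k. 1 \<le> k \<and> 2 * k < n + 1 \<longrightarrow> hasG n (BBtpos n k) (gamt_pos n k) \<and> hasG (n + 1) (BBtneg n k) (gamt_neg n k)"
  proof (intro allI impI)
    fix k assume k: "1 \<le> k \<and> 2 * k < n + 1"
    show "hasG n (BBtpos n k) (gamt_pos n k) \<and> hasG (n + 1) (BBtneg n k) (gamt_neg n k)"
      unfolding gamt_pos_def gamt_neg_def
      using k by (intro conjI hasG_gv[OF item5[OF n Q]] hasG_gv[OF item6[OF n Q]]) auto
  qed
  show ?thesis unfolding QQ_def using P1 P2 by blast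
qed

lemma QQ_all: "N \<ge> 1 \<Longrightarrow> QQ N"
proof (induction N rule: dec_induct)
  case base then show ?case by (rule QQ1)
next
  case (step m) then show ?case using QQ_step[of "Suc m"] by simp
qed

theorem lemma3p3:
  fixes n :: nat
  assumes "n \<ge> 2"
  shows
   "(odd n \<longrightarrow> (\<forall>i. gam_pos n ((n + 1) div 2) i =
        (\<Sum>k=1..(n - 1) div 2. gamt_pos (n - 1) k i + gam_neg (n - 1) k i))) \<and>
    (odd n \<longrightarrow> (\<forall>i. gam_neg n ((n + 1) div 2) i =
        (\<Sum>k=1..(n - 1) div 2. gamt_neg (n - 1) k i + shift0 (gam_pos (n - 1) k) i))) \<and>
    (\<forall>j. 1 \<le> j \<and> 2 * j < n + 1 \<longrightarrow> (\<forall>i.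
       gam_pos n j i =
         2 * (\<Sum>k=1..n div 2. gam_neg (n - 1) k i)
         + 2 * (\<Sum>k=1..j - 1. gamt_pos (n - 1) k i)
         + (\<Sum>k=j..n div 2. gam_pos (n - 1) k i))) \<and>
    (\<forall>j. 1 \<le> j \<and> 2 * j < n + 1 \<longrightarrow> (\<forall>i.
       gam_neg n j i =
         2 * (\<Sum>k=1..n div 2. shift0 (gam_pos (n - 1) k) i)
         + 2 * (\<Sum>k=1..j - 1. gamt_neg (n - 1) k i)
         + (\<Sum>k=j..n div 2. gam_neg (n - 1) k i))) \<and>
    (\<forall>j. 1 \<le> j \<and> 2 * j < n + 1 \<longrightarrow> (\<forall>i.
       gamt_pos n j i =
         (\<Sum>k=1..j - 1. gamt_pos (n - 1) k i)
         + 2 * (\<Sum>k=j..n div 2. shift0 (gam_pos (n - 1) k) i)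
         + (\<Sum>k=1..n div 2. gam_neg (n - 1) k i))) \<and>
    (\<forall>j. 1 \<le> j \<and> 2 * j < n + 1 \<longrightarrow> (\<forall>i.
       gamt_neg n j i =
         (\<Sum>k=1..j - 1. gamt_neg (n - 1) k i)
         + 2 * (\<Sum>k=j..n div 2. shift0 (gam_neg (n - 1) k) i)
         + (\<Sum>k=1..n div 2. shift0 (gam_pos (n - 1) k) i)))"
proof -
  have n: "n \<ge> 2" by (rule assms)
  have Q: "QQ (n - 1)" using n by (intro QQ_all) simp
  show ?thesis
  proof (intro conjI allI impI)
    fix i assume o: "odd n"
    show "gam_pos n ((n + 1) div 2) i = (\<Sum>k=1..(n - 1) div 2. gamt_pos (n - 1) k i + gam_neg (n - 1) k i)"
      unfolding gam_pos_def hasG_gamma[OF item1[OF n Q o]] ..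
  next
    fix i assume o: "odd n"
    show "gam_neg n ((n + 1) div 2) i = (\<Sum>k=1..(n - 1) div 2. gamt_neg (n - 1) k i + shift0 (gam_pos (n - 1) k) i)"
      unfolding gam_neg_def hasG_gamma[OF item2[OF n Q o]] ..
  next
    fix j i assume j: "1 \<le> j \<and> 2 * j < n + 1"
    show "gam_pos n j i = 2 * (\<Sum>k=1..n div 2. gam_neg (n - 1) k i)
         + 2 * (\<Sum>k=1..j - 1. gamt_pos (n - 1) k i) + (\<Sum>k=j..n div 2. gam_pos (n - 1) k i)"
      unfolding gam_pos_def hasG_gamma[OF item3[OF n Q conjunct1[OF j] conjunct2[OF j]]] ..
  next
    fix j i assume j: "1 \<le> j \<and> 2 * j < n + 1"
    show "gam_neg n j i = 2 * (\<Sum>k=1..n div 2. shift0 (gam_pos (n - 1) k) i)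
         + 2 * (\<Sum>k=1..j - 1. gamt_neg (n - 1) k i) + (\<Sum>k=j..n div 2. gam_neg (n - 1) k i)"
      unfolding gam_neg_def hasG_gamma[OF item4[OF n Q conjunct1[OF j] conjunct2[OF j]]] ..
  next
    fix j i assume j: "1 \<le> j \<and> 2 * j < n + 1"
    show "gamt_pos n j i = (\<Sum>k=1..j - 1. gamt_pos (n - 1) k i)
         + 2 * (\<Sum>k=j..n div 2. shift0 (gam_pos (n - 1) k) i) + (\<Sum>k=1..n div 2. gam_neg (n - 1) k i)"
      unfolding gamt_pos_def hasG_gamma[OF item5[OF n Q conjunct1[OF j] conjunct2[OF j]]] ..
  next
    fix j i assume j: "1 \<le> j \<and> 2 * j < n + 1"
    show "gamt_neg n j i = (\<Sum>k=1..j - 1. gamt_neg (n - 1) k i)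
         + 2 * (\<Sum>k=j..n div 2. shift0 (gam_neg (n - 1) k) i) + (\<Sum>k=1..n div 2. shift0 (gam_pos (n - 1) k) i)"
      unfolding gamt_neg_def hasG_gamma[OF item6[OF n Q conjunct1[OF j] conjunct2[OF j]]] ..
  qed
qed

end
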